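(* Let $\otimes$ and $\oplus$ be uninorms on $[0,1]$. If $\otimes$ satisfies property $A$ and $\oplus$ satisfies property $B'$, then $(\otimes,\oplus)$ satisfies the dual rearrangement inequality.
   Context: A uninorm is a function $\otimes:[0,1]^2\to[0,1]$ that is commutative, associative, monotonic ($x\leq y$ implies $x\otimes z\leq y\otimes z$), and has an identity element $e\in[0,1]$. A function $f$ satisfies property $A$ if for all $0\leq x\leq y\leq z\leq w\leq 1$, $w+x\leq y+z$ implies $f(x,w)\leq f(y,z)$; property $B'$ if for all $0\leq x\leq y\leq1$ and $0\leq z\leq w\leq1$, $f(x,w)-f(x,z)\geq f(y,w)-f(y,z)$. The pair $(\otimes,\oplus)$ satisfies the dual rearrangement inequality if for every $n\geq1$, all $0\leq x_1\leq\cdots\leq x_n\leq 1$, $0\leq y_1\leq\cdots\leq y_n\leq 1$ and every permutation $\sigma$ of $\{1,\dots,n\}$, $$(x_n\oplus y_1)\otimes\cdots\otimes(x_1\oplus y_n)\geq (x_{\sigma(1)}\oplus y_1)\otimes\cdots\otimes(x_{\sigma(n)}\oplus y_n)\geq (x_1\oplus y_1)\otimes\cdots\otimes(x_n\oplus y_n).$$ *)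

theory Defs
  imports Complex_Main "HOL-Combinatorics.Permutations"
begin

definition uninorm :: "(real \<Rightarrow> real \<Rightarrow> real) \<Rightarrow> bool" where
  "uninorm U \<longleftrightarrow>
     (\<forall>x\<in>{0..1}. \<forall>y\<in>{0..1}. U x y \<in> {0..1}) \<and>
     (\<forall>x\<in>{0..1}. \<forall>y\<in>{0..1}. U x y = U y x) \<and>
     (\<forall>x\<in>{0..1}. \<forall>y\<in>{0..1}. \<forall>z\<in>{0..1}. U (U x y) z = U x (U y z)) \<and>
     (\<forall>x\<in>{0..1}. \<forall>y\<in>{0..1}. \<forall>z\<in>{0..1}. x \<le> y \<longrightarrow> U x z \<le> U y z) \<and>
     (\<exists>e\<in>{0..1}. \<forall>x\<in>{0..1}. U e x = x)"

definition propA :: "(real \<Rightarrow> real \<Rightarrow> real) \<Rightarrow> bool" where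
  "propA f \<longleftrightarrow> (\<forall>x y z w. 0 \<le> x \<and> x \<le> y \<and> y \<le> z \<and> z \<le> w \<and> w \<le> 1 \<and> w + x \<le> y + z
      \<longrightarrow> f x w \<le> f y z)"

definition propB' :: "(real \<Rightarrow> real \<Rightarrow> real) \<Rightarrow> bool" where
  "propB' f \<longleftrightarrow> (\<forall>x y z w. 0 \<le> x \<and> x \<le> y \<and> y \<le> 1 \<and> 0 \<le> z \<and> z \<le> w \<and> w \<le> 1
      \<longrightarrow> f x w - f x z \<ge> f y w - f y z)"

fun ufold :: "(real \<Rightarrow> real \<Rightarrow> real) \<Rightarrow> real list \<Rightarrow> real" where
  "ufold U [] = undefined"
| "ufold U (a # as) = foldl U a as"

definition rprod :: "(real \<Rightarrow> real \<Rightarrow> real) \<Rightarrow> (real \<Rightarrow> real \<Rightarrow> real) \<Rightarrow> nat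
    \<Rightarrow> (nat \<Rightarrow> real) \<Rightarrow> (nat \<Rightarrow> real) \<Rightarrow> (nat \<Rightarrow> nat) \<Rightarrow> real" where
  "rprod T S n x y s = ufold T (map (\<lambda>i. S (x (s i)) (y i)) [1..<n+1])"

definition dual_rearrangement ::
  "(real \<Rightarrow> real \<Rightarrow> real) \<Rightarrow> (real \<Rightarrow> real \<Rightarrow> real) \<Rightarrow> bool" where
  "dual_rearrangement T S \<longleftrightarrow>
    (\<forall>n::nat. \<forall>x y :: nat \<Rightarrow> real. \<forall>\<sigma>.
       n \<ge> 1 \<and>
       (\<forall>i\<in>{1..n}. 0 \<le> x i \<and> x i \<le> 1 \<and> 0 \<le> y i \<and> y i \<le> 1) \<and>
       (\<forall>i j. 1 \<le> i \<and> i \<le> j \<and> j \<le> n \<longrightarrow> x i \<le> x j \<and> y i \<le> y j) \<and>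
       \<sigma> permutes {1..n}
       \<longrightarrow> rprod T S n x y (\<lambda>i. n + 1 - i) \<ge> rprod T S n x y \<sigma> \<and>
           rprod T S n x y \<sigma> \<ge> rprod T S n x y id)"

end

theory Submission
  imports Defs
begin

definition clamp :: "real \<Rightarrow> real" where "clamp u = max 0 (min 1 u)"
definition extT :: "(real \<Rightarrow> real \<Rightarrow> real) \<Rightarrow> real \<Rightarrow> real \<Rightarrow> real" where
  "extT T u v = T (clamp u) (clamp v)"

lemma clamp_in: "clamp u \<in> {0..1}" by (simp add: clamp_def)
lemma clamp_id: "u \<in> {0..1} \<Longrightarrow> clamp u = u" by (simp add: clamp_def)
lemma clamp_mono: "u \<le> v \<Longrightarrow> clamp u \<le> clamp v" by (simp add: clamp_def)

lemma un_closed: "uninorm T \<Longrightarrow> u \<in> {0..1} \<Longrightarrow> v \<in> {0..1} \<Longrightarrow> T u v \<in> {0..1}"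
  unfolding uninorm_def by blast
lemma un_comm: "uninorm T \<Longrightarrow> u \<in> {0..1} \<Longrightarrow> v \<in> {0..1} \<Longrightarrow> T u v = T v u"
  unfolding uninorm_def by blast
lemma un_assoc: "uninorm T \<Longrightarrow> u \<in> {0..1} \<Longrightarrow> v \<in> {0..1} \<Longrightarrow> w \<in> {0..1} \<Longrightarrow> T (T u v) w = T u (T v w)"
  unfolding uninorm_def by blast
lemma un_mono: "uninorm T \<Longrightarrow> u \<in> {0..1} \<Longrightarrow> v \<in> {0..1} \<Longrightarrow> w \<in> {0..1} \<Longrightarrow> u \<le> v \<Longrightarrow> T u w \<le> T v w"
  unfolding uninorm_def by blast
lemma un_mono2: "uninorm T \<Longrightarrow> u \<in> {0..1} \<Longrightarrow> v \<in> {0..1} \<Longrightarrow> w \<in> {0..1} \<Longrightarrow> u \<le> v \<Longrightarrow> T w u \<le> T w v"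
  using un_mono un_comm by metis

lemma ext_in: "uninorm T \<Longrightarrow> extT T u v \<in> {0..1}"
  unfolding extT_def by (rule un_closed[OF _ clamp_in clamp_in])
lemma ext_id: "u \<in> {0..1} \<Longrightarrow> v \<in> {0..1} \<Longrightarrow> extT T u v = T u v"
  by (simp add: extT_def clamp_id)
lemma ext_comm: "uninorm T \<Longrightarrow> extT T u v = extT T v u"
  unfolding extT_def by (rule un_comm[OF _ clamp_in clamp_in])
lemma ext_assoc: "uninorm T \<Longrightarrow> extT T (extT T u v) w = extT T u (extT T v w)"
  unfolding extT_def
  by (simp only: clamp_id[OF un_closed[OF _ clamp_in clamp_in]]) (rule un_assoc[OF _ clamp_in clamp_in clamp_in])
lemma ext_mono: "uninorm T \<Longrightarrow> u \<le> v \<Longrightarrow> extT T u w \<le> extT T v w"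
  unfolding extT_def by (rule un_mono[OF _ clamp_in clamp_in clamp_in clamp_mono])

lemma ext_cfc: "uninorm T \<Longrightarrow> comp_fun_commute (extT T)"
  unfolding comp_fun_commute_def
  by (auto simp: fun_eq_iff) (metis ext_assoc ext_comm)

lemma foldl_eq:
  assumes U: "uninorm T" and e: "e \<in> {0..1}" "\<forall>x\<in>{0..1}. T e x = x"
  shows "a \<in> {0..1} \<Longrightarrow> set as \<subseteq> {0..1} \<Longrightarrow> foldl T a as = fold_mset (extT T) e (add_mset a (mset as))"
proof (induction as arbitrary: a)
  case Nil
  have "fold_mset (extT T) e (add_mset a {#}) = extT T a e"
    by (simp add: comp_fun_commute.fold_mset_add_mset[OF ext_cfc[OF U]])
  also have "\<dots> = a" using Nil e by (simp add: ext_id un_comm[OF U])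
  finally show ?case by simp
next
  case (Cons b bs)
  have tab: "T a b \<in> {0..1}" using Cons un_closed[OF U, of a b] by simp
  have "foldl T a (b # bs) = foldl T (T a b) bs" by simp
  also have "\<dots> = fold_mset (extT T) e (add_mset (T a b) (mset bs))" using Cons tab by simp
  also have "\<dots> = extT T (extT T a b) (fold_mset (extT T) e (mset bs))"
    using Cons by (simp add: comp_fun_commute.fold_mset_add_mset[OF ext_cfc[OF U]] ext_id)
  also have "\<dots> = fold_mset (extT T) e (add_mset a (mset (b # bs)))"
    by (simp add: comp_fun_commute.fold_mset_add_mset[OF ext_cfc[OF U]] ext_assoc[OF U])
  finally show ?case .
qed

lemma rprod_eq:
  assumes U: "uninorm T" and e: "e \<in> {0..1}" "\<forall>x\<in>{0..1}. T e x = x"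
    and n: "n \<ge> 1" and f: "\<forall>i\<in>{1..n}. S (x (s i)) (y i) \<in> {0..1}"
  shows "rprod T S n x y s = fold_mset (extT T) e (image_mset (\<lambda>i. S (x (s i)) (y i)) (mset_set {1..n}))"
proof -
  obtain m where m: "n = Suc m" using n by (cases n) auto
  have l: "[1..<n+1] = 1 # [2..<n+1]" using upt_conv_Cons[of 1 "n+1"] n by (simp add: numeral_2_eq_2)
  have st: "{1..<n+1} = {1..n}" by auto
  have "mset [1..<n+1] = mset_set {1..n}" by (simp only: mset_upt st)
  hence ms: "add_mset 1 (mset [2..<n+1]) = mset_set {1..n}" using l by simp
  define f where "f = (\<lambda>i. S (x (s i)) (y i))"
  have "rprod T S n x y s = foldl T (f 1) (map f [2..<n+1])"
    unfolding rprod_def l f_def by simp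
  also have "\<dots> = fold_mset (extT T) e (add_mset (f 1) (mset (map f [2..<n+1])))"
    apply (rule foldl_eq[OF U e])
    using f n unfolding f_def by auto
  also have "add_mset (f 1) (mset (map f [2..<n+1])) = image_mset f (mset_set {1..n})"
    by (simp only: ms[symmetric] mset_map image_mset_add_mset)
  finally show ?thesis unfolding f_def .
qed

lemma swap_G:
  assumes U: "uninorm T" and fin: "finite A" and ij: "i \<in> A" "j \<in> A" "i \<noteq> j"
    and eq: "\<forall>k\<in>A - {i,j}. f k = g k"
    and le: "extT T (f i) (f j) \<le> extT T (g i) (g j)"
  shows "fold_mset (extT T) e (image_mset f (mset_set A)) \<le> fold_mset (extT T) e (image_mset g (mset_set A))"
proof -
  note fa = comp_fun_commute.fold_mset_add_mset[OF ext_cfc[OF U]]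
  have A: "mset_set A = add_mset i (add_mset j (mset_set (A - {i} - {j})))"
    using fin ij by (metis Diff_iff finite_Diff mset_set.remove singletonD)
  have R: "image_mset f (mset_set (A - {i} - {j})) = image_mset g (mset_set (A - {i} - {j}))"
    by (rule image_mset_cong) (use eq fin in auto)
  define Z where "Z = fold_mset (extT T) e (image_mset g (mset_set (A - {i} - {j})))"
  have "fold_mset (extT T) e (image_mset f (mset_set A)) = extT T (extT T (f i) (f j)) Z"
    unfolding A Z_def by (simp add: fa ext_assoc[OF U] R)
  also have "\<dots> \<le> extT T (extT T (g i) (g j)) Z" by (rule ext_mono[OF U le])
  also have "\<dots> = fold_mset (extT T) e (image_mset g (mset_set A))"
    unfolding A Z_def by (simp add: fa ext_assoc[OF U])
  finally show ?thesis .
qed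

lemma key:
  assumes T: "uninorm T" and S: "uninorm S" and A: "propA T" and B: "propB' S"
    and a: "a \<in> {0..1}" and b: "b \<in> {0..1}" and c: "c \<in> {0..1}" and d: "d \<in> {0..1}"
    and ab: "a \<le> b" and cd: "c \<le> d"
  shows "T (S a c) (S b d) \<le> T (S b c) (S a d)"
proof -
  define p where "p = S a c"
  define q where "q = S b d"
  define r where "r = S b c"
  define s where "s = S a d"
  have pi: "p \<in> {0..1}" "q \<in> {0..1}" "r \<in> {0..1}" "s \<in> {0..1}"
    unfolding p_def q_def r_def s_def using un_closed[OF S] a b c d by auto
  have pr: "p \<le> r" unfolding p_def r_def by (rule un_mono[OF S a b c ab])
  have ps: "p \<le> s" unfolding p_def s_def by (rule un_mono2[OF S c d a cd])
  have rq: "r \<le> q" unfolding r_def q_def by (rule un_mono2[OF S c d b cd])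
  have sq: "s \<le> q" unfolding s_def q_def by (rule un_mono[OF S a b d ab])
  have "S a d - S a c \<ge> S b d - S b c"
    using B a b c d ab cd unfolding propB'_def by auto
  hence sum: "q + p \<le> r + s" unfolding p_def q_def r_def s_def by simp
  show ?thesis
  proof (cases "r \<le> s")
    case True
    have "T p q \<le> T r s" using A pi pr True sq sum unfolding propA_def by auto
    thus ?thesis unfolding p_def q_def r_def s_def .
  next
    case False
    have "T p q \<le> T s r" using A pi ps False rq sum unfolding propA_def by auto
    also have "\<dots> = T r s" using un_comm[OF T] pi by blast
    finally show ?thesis unfolding p_def q_def r_def s_def .
  qed
qed

lemma dec_perm:
  assumes p: "\<sigma> permutes {1..n}" and dec: "\<forall>i\<in>{1..n}. \<forall>j\<in>{1..n}. i < j \<longrightarrow> \<sigma> j < \<sigma> i"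
    and k: "k \<in> {1..n::nat}"
  shows "\<sigma> k = n + 1 - k"
proof -
  have inj: "inj_on \<sigma> X" for X using permutes_inj[OF p] by (simp add: inj_on_def inj_def)
  have sk: "\<sigma> k \<in> {1..n}" using permutes_in_image[OF p] k by simp
  have "card {k<..n} \<le> card {1..<\<sigma> k}"
  proof (rule card_inj_on_le[OF inj])
    show "\<sigma> ` {k<..n} \<subseteq> {1..<\<sigma> k}"
    proof
      fix v assume "v \<in> \<sigma> ` {k<..n}"
      then obtain l where l: "l \<in> {k<..n}" "v = \<sigma> l" by auto
      have "\<sigma> l \<in> {1..n}" using permutes_in_image[OF p] l k by simp
      moreover have "\<sigma> l < \<sigma> k" using dec l k by auto
      ultimately show "v \<in> {1..<\<sigma> k}" using l by simp
    qed
  qed simp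
  moreover have "card {1..<k} \<le> card {\<sigma> k<..n}"
  proof (rule card_inj_on_le[OF inj])
    show "\<sigma> ` {1..<k} \<subseteq> {\<sigma> k<..n}"
    proof
      fix v assume "v \<in> \<sigma> ` {1..<k}"
      then obtain l where l: "l \<in> {1..<k}" "v = \<sigma> l" by auto
      have "\<sigma> l \<in> {1..n}" using permutes_in_image[OF p] l k by simp
      moreover have "\<sigma> k < \<sigma> l" using dec l k by auto
      ultimately show "v \<in> {\<sigma> k<..n}" using l by simp
    qed
  qed simp
  ultimately show ?thesis using sk k by simp linarith
qed

lemma inc_perm:
  assumes p: "\<sigma> permutes {1..n}" and inc: "\<forall>i\<in>{1..n}. \<forall>j\<in>{1..n}. i < j \<longrightarrow> \<sigma> i < \<sigma> j"
    and k: "k \<in> {1..n::nat}"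
  shows "\<sigma> k = k"
proof -
  have inj: "inj_on \<sigma> X" for X using permutes_inj[OF p] by (simp add: inj_on_def inj_def)
  have sk: "\<sigma> k \<in> {1..n}" using permutes_in_image[OF p] k by simp
  have "card {k<..n} \<le> card {\<sigma> k<..n}"
  proof (rule card_inj_on_le[OF inj])
    show "\<sigma> ` {k<..n} \<subseteq> {\<sigma> k<..n}"
    proof
      fix v assume "v \<in> \<sigma> ` {k<..n}"
      then obtain l where l: "l \<in> {k<..n}" "v = \<sigma> l" by auto
      have "\<sigma> l \<in> {1..n}" using permutes_in_image[OF p] l k by simp
      moreover have "\<sigma> k < \<sigma> l" using inc l k by auto
      ultimately show "v \<in> {\<sigma> k<..n}" using l by simp
    qed
  qed simp
  moreover have "card {1..<k} \<le> card {1..<\<sigma> k}"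
  proof (rule card_inj_on_le[OF inj])
    show "\<sigma> ` {1..<k} \<subseteq> {1..<\<sigma> k}"
    proof
      fix v assume "v \<in> \<sigma> ` {1..<k}"
      then obtain l where l: "l \<in> {1..<k}" "v = \<sigma> l" by auto
      have "\<sigma> l \<in> {1..n}" using permutes_in_image[OF p] l k by simp
      moreover have "\<sigma> l < \<sigma> k" using inc l k by auto
      ultimately show "v \<in> {1..<\<sigma> k}" using l by simp
    qed
  qed simp
  ultimately show ?thesis using sk k by simp linarith
qed

lemma nat_ineq:
  fixes i j s t :: nat
  assumes "i < j" "s < t" shows "i * t + j * s < i * s + j * t"
proof -
  obtain a where a: "j = i + a" "a > 0" using assms(1) by (metis less_imp_add_positive)
  obtain b where b: "t = s + b" "b > 0" using assms(2) by (metis less_imp_add_positive)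
  show ?thesis unfolding a b by (simp add: algebra_simps a b)
qed

lemma msum_lt:
  assumes fin: "finite (A::nat set)" and ij: "i \<in> A" "j \<in> A" "i < j" and lt: "\<sigma> i < \<sigma> j"
  shows "(\<Sum>k\<in>A. k * (\<sigma> \<circ> Transposition.transpose i j) k) < (\<Sum>k\<in>A. k * \<sigma> k)"
proof -
  let ?t = "\<sigma> \<circ> Transposition.transpose i j"
  have ji: "j \<in> A - {i}" using ij by auto
  have rest: "(\<Sum>k\<in>A - {i} - {j}. k * ?t k) = (\<Sum>k\<in>A - {i} - {j}. k * \<sigma> k)"
    by (rule sum.cong) (auto simp: transpose_apply_other)
  have e1: "(\<Sum>k\<in>A. k * ?t k) = i * \<sigma> j + (j * \<sigma> i + (\<Sum>k\<in>A - {i} - {j}. k * ?t k))"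
    using sum.remove[OF fin ij(1), of "\<lambda>k. k * ?t k"] sum.remove[OF _ ji, of "\<lambda>k. k * ?t k"] fin
    by simp
  have e2: "(\<Sum>k\<in>A. k * \<sigma> k) = i * \<sigma> i + (j * \<sigma> j + (\<Sum>k\<in>A - {i} - {j}. k * \<sigma> k))"
    using sum.remove[OF fin ij(1), of "\<lambda>k. k * \<sigma> k"] sum.remove[OF _ ji, of "\<lambda>k. k * \<sigma> k"] fin
    by simp
  have "i * \<sigma> j + j * \<sigma> i < i * \<sigma> i + j * \<sigma> j"
    using nat_ineq[OF ij(3) lt] .
  thus ?thesis using e1 e2 rest by simp
qed

definition FF where
  "FF T S e n x y s = fold_mset (extT T) e (image_mset (\<lambda>k. S (x (s k)) (y k)) (mset_set {1..n}))"

lemma swap_perm: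
  fixes x y :: "nat \<Rightarrow> real" and n m :: nat and \<sigma> :: "nat \<Rightarrow> nat"
  assumes T: "uninorm T" and S: "uninorm S" and A: "propA T" and B: "propB' S"
    and H: "\<forall>i\<in>{1..n}. 0 \<le> x i \<and> x i \<le> 1 \<and> 0 \<le> y i \<and> y i \<le> 1"
    and M: "\<forall>i j. 1 \<le> i \<and> i \<le> j \<and> j \<le> n \<longrightarrow> x i \<le> x j \<and> y i \<le> y j"
    and p: "\<sigma> permutes {1..n}" and i: "i \<in> {1..n}" and j: "j \<in> {1..n}" and ij: "i < j"
    and xle: "x (\<sigma> i) \<le> x (\<sigma> j)"
  shows "FF T S e n x y \<sigma> \<le> FF T S e n x y (\<sigma> \<circ> Transposition.transpose i j)"
  unfolding FF_def
proof (rule swap_G[OF T finite_atLeastAtMost i j])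
  show "i \<noteq> j" using ij by simp
  show "\<forall>k\<in>{1..n} - {i, j}. S (x (\<sigma> k)) (y k) = S (x ((\<sigma> \<circ> Transposition.transpose i j) k)) (y k)"
    by (auto simp: transpose_apply_other)
  have si: "\<sigma> i \<in> {1..n}" and sj: "\<sigma> j \<in> {1..n}" using permutes_in_image[OF p] i j by auto
  have a: "x (\<sigma> i) \<in> {0..1}" and b: "x (\<sigma> j) \<in> {0..1}" using H si sj by auto
  have c: "y i \<in> {0..1}" and d: "y j \<in> {0..1}" using H i j by auto
  have cd: "y i \<le> y j" using M i j ij by auto
  have m: "S u v \<in> {0..1}" if "u \<in> {0..1}" "v \<in> {0..1}" for u v using un_closed[OF S that] .
  have "extT T (S (x (\<sigma> i)) (y i)) (S (x (\<sigma> j)) (y j)) = T (S (x (\<sigma> i)) (y i)) (S (x (\<sigma> j)) (y j))"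
    by (rule ext_id[OF m[OF a c] m[OF b d]])
  also have "\<dots> \<le> T (S (x (\<sigma> j)) (y i)) (S (x (\<sigma> i)) (y j))"
    by (rule key[OF T S A B a b c d xle cd])
  also have "\<dots> = extT T (S (x (\<sigma> j)) (y i)) (S (x (\<sigma> i)) (y j))"
    by (rule ext_id[OF m[OF b c] m[OF a d], symmetric])
  finally show "extT T (S (x (\<sigma> i)) (y i)) (S (x (\<sigma> j)) (y j))
    \<le> extT T (S (x ((\<sigma> \<circ> Transposition.transpose i j) i)) (y i)) (S (x ((\<sigma> \<circ> Transposition.transpose i j) j)) (y j))"
    by simp
qed

lemma upper:
  fixes x y :: "nat \<Rightarrow> real" and n m :: nat and \<sigma> :: "nat \<Rightarrow> nat"
  assumes T: "uninorm T" and S: "uninorm S" and A: "propA T" and B: "propB' S"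
    and H: "\<forall>i\<in>{1..n}. 0 \<le> x i \<and> x i \<le> 1 \<and> 0 \<le> y i \<and> y i \<le> 1"
    and M: "\<forall>i j. 1 \<le> i \<and> i \<le> j \<and> j \<le> n \<longrightarrow> x i \<le> x j \<and> y i \<le> y j"
  shows "\<sigma> permutes {1..n} \<Longrightarrow> m = (\<Sum>k\<in>{1..n}. k * \<sigma> k) \<Longrightarrow> FF T S e n x y \<sigma> \<le> FF T S e n x y (\<lambda>i. n + 1 - i)"
proof (induction m arbitrary: \<sigma> rule: less_induct)
  case (less m)
  note p = less.prems(1)
  show ?case
  proof (cases "\<exists>i\<in>{1..n}. \<exists>j\<in>{1..n}. i < j \<and> \<sigma> i < \<sigma> j")
    case True
    then obtain i j where i: "i \<in> {1..n}" and j: "j \<in> {1..n}" and ij: "i < j" and s: "\<sigma> i < \<sigma> j" by blast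
    have p': "\<sigma> \<circ> Transposition.transpose i j permutes {1..n}"
      by (rule permutes_compose[OF permutes_swap_id[OF i j] p])
    have si: "\<sigma> i \<in> {1..n}" and sj: "\<sigma> j \<in> {1..n}" using permutes_in_image[OF p] i j by auto
    have xle: "x (\<sigma> i) \<le> x (\<sigma> j)" using M si sj s by auto
    have "FF T S e n x y \<sigma> \<le> FF T S e n x y (\<sigma> \<circ> Transposition.transpose i j)"
      by (rule swap_perm[OF T S A B H M p i j ij xle])
    also have "\<dots> \<le> FF T S e n x y (\<lambda>i. n + 1 - i)"
      by (rule less.IH[OF _ p' refl]) (use msum_lt[OF finite_atLeastAtMost i j ij s] less.prems(2) in simp)
    finally show ?thesis .
  next
    case False
    have dec: "\<forall>i\<in>{1..n}. \<forall>j\<in>{1..n}. i < j \<longrightarrow> \<sigma> j < \<sigma> i"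
    proof (intro ballI impI)
      fix i j assume i: "i \<in> {1..n}" and j: "j \<in> {1..n}" and ij: "i < j"
      have "\<sigma> i \<noteq> \<sigma> j" using permutes_inj[OF p] ij by (metis injD less_irrefl)
      thus "\<sigma> j < \<sigma> i" using False i j ij by force
    qed
    have "image_mset (\<lambda>k. S (x (\<sigma> k)) (y k)) (mset_set {1..n}) = image_mset (\<lambda>k. S (x (n + 1 - k)) (y k)) (mset_set {1..n})"
      by (rule image_mset_cong) (simp add: dec_perm[OF p dec])
    thus ?thesis unfolding FF_def by simp
  qed
qed

lemma lower:
  fixes x y :: "nat \<Rightarrow> real" and n m :: nat and \<sigma> :: "nat \<Rightarrow> nat"
  assumes T: "uninorm T" and S: "uninorm S" and A: "propA T" and B: "propB' S"
    and H: "\<forall>i\<in>{1..n}. 0 \<le> x i \<and> x i \<le> 1 \<and> 0 \<le> y i \<and> y i \<le> 1"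
    and M: "\<forall>i j. 1 \<le> i \<and> i \<le> j \<and> j \<le> n \<longrightarrow> x i \<le> x j \<and> y i \<le> y j"
  shows "\<sigma> permutes {1..n} \<Longrightarrow> m = n * n * n - (\<Sum>k\<in>{1..n}. k * \<sigma> k) \<Longrightarrow> FF T S e n x y id \<le> FF T S e n x y \<sigma>"
proof (induction m arbitrary: \<sigma> rule: less_induct)
  case (less m)
  have bound: "(\<Sum>k\<in>{1..n}. k * \<tau> k) \<le> n * n * n" if tp: "\<tau> permutes {1..n}" for \<tau>
  proof -
    have "(\<Sum>k\<in>{1..n}. k * \<tau> k) \<le> of_nat (card {1..n}) * (n * n)"
    proof (rule sum_bounded_above)
      fix k assume k: "k \<in> {1..n}"
      hence "\<tau> k \<in> {1..n}" using permutes_in_image[OF tp] by blast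
      hence "\<tau> k \<le> n" by simp
      thus "k * \<tau> k \<le> n * n" using k by (simp add: mult_le_mono)
    qed
    thus ?thesis by simp
  qed
  note p = less.prems(1)
  show ?case
  proof (cases "\<exists>i\<in>{1..n}. \<exists>j\<in>{1..n}. i < j \<and> \<sigma> j < \<sigma> i")
    case True
    then obtain i j where i: "i \<in> {1..n}" and j: "j \<in> {1..n}" and ij: "i < j" and s: "\<sigma> j < \<sigma> i" by blast
    define \<tau> where "\<tau> = \<sigma> \<circ> Transposition.transpose i j"
    have p': "\<tau> permutes {1..n}" unfolding \<tau>_def
      by (rule permutes_compose[OF permutes_swap_id[OF i j] p])
    have hback: "\<tau> \<circ> Transposition.transpose i j = \<sigma>" unfolding \<tau>_def by (simp add: fun_eq_iff)
    have ti: "\<tau> i = \<sigma> j" and tj: "\<tau> j = \<sigma> i" unfolding \<tau>_def by simp_all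
    have s': "\<tau> i < \<tau> j" using s ti tj by simp
    have si: "\<tau> i \<in> {1..n}" and sj: "\<tau> j \<in> {1..n}" using permutes_in_image[OF p'] i j by auto
    have xle: "x (\<tau> i) \<le> x (\<tau> j)" using M si sj s' by auto
    have lt: "(\<Sum>k\<in>{1..n}. k * \<sigma> k) < (\<Sum>k\<in>{1..n}. k * \<tau> k)"
      using msum_lt[OF finite_atLeastAtMost i j ij s'] hback by simp
    have "FF T S e n x y id \<le> FF T S e n x y \<tau>"
      by (rule less.IH[OF _ p' refl]) (use lt bound[OF p'] less.prems(2) in simp)
    also have "\<dots> \<le> FF T S e n x y (\<tau> \<circ> Transposition.transpose i j)"
      by (rule swap_perm[OF T S A B H M p' i j ij xle])
    finally show ?thesis unfolding hback .
  next
    case False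
    have inc: "\<forall>i\<in>{1..n}. \<forall>j\<in>{1..n}. i < j \<longrightarrow> \<sigma> i < \<sigma> j"
    proof (intro ballI impI)
      fix i j assume i: "i \<in> {1..n}" and j: "j \<in> {1..n}" and ij: "i < j"
      have "\<sigma> i \<noteq> \<sigma> j" using permutes_inj[OF p] ij by (metis injD less_irrefl)
      thus "\<sigma> i < \<sigma> j" using False i j ij by force
    qed
    have "image_mset (\<lambda>k. S (x (\<sigma> k)) (y k)) (mset_set {1..n}) = image_mset (\<lambda>k. S (x (id k)) (y k)) (mset_set {1..n})"
      by (rule image_mset_cong) (simp add: inc_perm[OF p inc])
    thus ?thesis unfolding FF_def by simp
  qed
qed

theorem theorem7:
  fixes T S :: "real \<Rightarrow> real \<Rightarrow> real"
  assumes "uninorm T" and "uninorm S"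
    and "propA T" and "propB' S"
  shows "dual_rearrangement T S"
  unfolding dual_rearrangement_def
proof (intro allI impI)
  fix n :: nat and x y :: "nat \<Rightarrow> real" and \<sigma>
  assume h: "1 \<le> n \<and>
       (\<forall>i\<in>{1..n}. 0 \<le> x i \<and> x i \<le> 1 \<and> 0 \<le> y i \<and> y i \<le> 1) \<and>
       (\<forall>i j. 1 \<le> i \<and> i \<le> j \<and> j \<le> n \<longrightarrow> x i \<le> x j \<and> y i \<le> y j) \<and>
       \<sigma> permutes {1..n}"
  hence n: "1 \<le> n" and H: "\<forall>i\<in>{1..n}. 0 \<le> x i \<and> x i \<le> 1 \<and> 0 \<le> y i \<and> y i \<le> 1"
    and M: "\<forall>i j. 1 \<le> i \<and> i \<le> j \<and> j \<le> n \<longrightarrow> x i \<le> x j \<and> y i \<le> y j"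
    and p: "\<sigma> permutes {1..n}" by auto
  obtain e where e: "e \<in> {0..1}" "\<forall>x\<in>{0..1}. T e x = x" using assms(1) unfolding uninorm_def by blast
  have vals: "\<forall>i\<in>{1..n}. S (x (s i)) (y i) \<in> {0..1}" if s: "\<forall>i\<in>{1..n}. s i \<in> {1..n}" for s
  proof
    fix i assume i: "i \<in> {1..n}"
    have "x (s i) \<in> {0..1}" using H s i by auto
    moreover have "y i \<in> {0..1}" using H i by auto
    ultimately show "S (x (s i)) (y i) \<in> {0..1}" using un_closed[OF assms(2)] by blast
  qed
  have v1: "\<forall>i\<in>{1..n}. S (x (n + 1 - i)) (y i) \<in> {0..1}" by (rule vals) auto
  have v2: "\<forall>i\<in>{1..n}. S (x (\<sigma> i)) (y i) \<in> {0..1}" by (rule vals) (use permutes_in_image[OF p] in auto)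
  have v3: "\<forall>i\<in>{1..n}. S (x (id i)) (y i) \<in> {0..1}" by (rule vals) auto
  have r1: "rprod T S n x y (\<lambda>i. n + 1 - i) = FF T S e n x y (\<lambda>i. n + 1 - i)"
    unfolding FF_def using rprod_eq[OF assms(1) e n, where s="\<lambda>i. n + 1 - i" and S=S and x=x and y=y] v1 by blast
  have r2: "rprod T S n x y \<sigma> = FF T S e n x y \<sigma>"
    unfolding FF_def using rprod_eq[OF assms(1) e n, where s="\<sigma>" and S=S and x=x and y=y] v2 by blast
  have r3: "rprod T S n x y id = FF T S e n x y id"
    unfolding FF_def using rprod_eq[OF assms(1) e n, where s="id" and S=S and x=x and y=y] v3 by blast
  show "rprod T S n x y \<sigma> \<le> rprod T S n x y (\<lambda>i. n + 1 - i) \<and> rprod T S n x y id \<le> rprod T S n x y \<sigma>"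
    unfolding r1 r2 r3
    using upper[OF assms H M p refl] lower[OF assms H M p refl] by simp
qed
end
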